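(* Consider, for $x> 0$, the planar piecewise-smooth system $$\dot x=1,\qquad \dot y=-ay-\sin\!\left[\pi x\left(1+\tfrac12\lambda\right)\right],$$ with $a>0$, where $\lambda=\operatorname{sign}(y)$ for $y\neq0$ and $\lambda\in(-1,1)$ for $y=0$. Then its sliding manifold is $$\Lambda^{N}=\left\{(x,0)\in\mathbb{R}^2:\ x\in\left(\tfrac{2n}{3},\,2n\right),\ n\in\mathbb{N}\setminus\{0\}\right\}.$$
   Context: The sliding manifold is the set of points $(x,0)$ on the switching line $y=0$ for which there exists $\lambda\in(-1,1)$ with $\sin\!\left[\pi x\left(1+\tfrac12\lambda\right)\right]=0$, i.e. points where a motion $y\equiv0$, $\dot x=1$ along the switching line is possible. *)

theory Defs
  imports Complex_Main
begin

definition pws_field :: "real \<Rightarrow> real \<Rightarrow> real \<Rightarrow> real \<Rightarrow> real \<times> real" where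
  "pws_field a x y lam = (1, - a * y - sin (pi * x * (1 + lam / 2)))"

text \<open>Sliding manifold: points (x,0) of the switching line (in the domain x > 0) for which
  some lambda in (-1,1) makes the y-component of the field vanish, so that the motion
  y = 0, x' = 1 along the switching line is possible.\<close>
definition sliding_manifold :: "real \<Rightarrow> (real \<times> real) set" where
  "sliding_manifold a = {(x, 0) | x. x > 0 \<and>
      (\<exists>lam. -1 < lam \<and> lam < 1 \<and> snd (pws_field a x 0 lam) = 0)}"

end

theory Submission
  imports Defs
begin

theorem proposition2:
  fixes a :: real
  assumes "a > 0"
  shows "sliding_manifold a =
    {(x, 0) | x. \<exists>n::nat. n \<noteq> 0 \<and> 2 * real n / 3 < x \<and> x < 2 * real n}"
proof (rule set_eqI, rule iffI)
  fix p :: "real \<times> real" assume "p \<in> sliding_manifold a"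
  then obtain x lam where p: "p = (x, 0)" and x: "x > 0" and l: "-1 < lam" "lam < 1"
    and s: "sin (pi * x * (1 + lam / 2)) = 0"
    unfolding sliding_manifold_def pws_field_def by auto
  from s obtain i :: int where i: "pi * x * (1 + lam / 2) = of_int i * pi"
    using sin_zero_iff_int2 by blast
  hence xi: "x * (1 + lam / 2) = of_int i"
    by (metis mult.commute mult.left_commute pi_neq_zero mult_cancel_left)
  have "x * (1 + lam / 2) > 0" using x l by simp
  hence ipos: "i > 0" using xi by simp
  have lo: "x * (1 + lam/2) < x * (3/2)" using x l by (intro mult_strict_left_mono) auto
  have hi: "x * (1/2) < x * (1 + lam/2)" using x l by (intro mult_strict_left_mono) auto
  have "real (nat i) = of_int i" using ipos by simp
  hence "nat i \<noteq> 0 \<and> 2 * real (nat i) / 3 < x \<and> x < 2 * real (nat i)"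
    using ipos lo hi xi by auto
  thus "p \<in> {(x, 0) | x. \<exists>n::nat. n \<noteq> 0 \<and> 2 * real n / 3 < x \<and> x < 2 * real n}"
    using p by blast
next
  fix p :: "real \<times> real" assume "p \<in> {(x, 0) | x. \<exists>n::nat. n \<noteq> 0 \<and> 2 * real n / 3 < x \<and> x < 2 * real n}"
  then obtain x n where p: "p = (x, 0)" and n: "n \<noteq> 0" and b: "2 * real n / 3 < x" "x < 2 * real n"
    by blast
  have x: "x > 0" using n b by simp
  define lam where "lam = 2 * (real n / x - 1)"
  have q1: "real n / x < 3/2" using x b by (simp add: field_simps)
  have q2: "real n / x > 1/2" using x b by (simp add: field_simps)
  have l: "-1 < lam" "lam < 1" using q1 q2 unfolding lam_def by (auto simp: mult.commute)
  have e: "x * (1 + lam / 2) = real n" unfolding lam_def using x by (simp add: field_simps)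
  have "sin (pi * x * (1 + lam / 2)) = 0"
    using e by (metis mult.assoc mult.commute sin_npi)
  thus "p \<in> sliding_manifold a"
    unfolding sliding_manifold_def pws_field_def using p x l by auto
qed

end
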